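(* Let $\mathbb{C}$ be a locally small category and $\mathbb{C}_{\mathit{fin}}$ a full subcategory satisfying (C1)–(C5) below. Let $\mathbb{A}$ be a full subcategory of $\mathbb{C}_{\mathit{fin}}$, let $F\in\mathrm{Ob}(\mathbb{C})$ be universal and locally finite for $\mathbb{A}$, and let $A\in\mathrm{Ob}(\mathbb{A})$ and $t\ge2$ be arbitrary. Assume that for every $B\in\mathrm{Ob}(\mathbb{A})$ with $A\to B$ there is a coloring $\lambda_B:\hom(A,B)\to\{0,\dots,t-1\}$ essential at $B$. Then there exists an essential coloring $\gamma:\hom(A,F)\to\{0,\dots,t-1\}$.
   Context: Write $A\to B$ if $\hom(A,B)\ne\varnothing$. Conditions: (C1) all morphisms of $\mathbb{C}$ are monomorphisms; (C2) $\mathrm{Ob}(\mathbb{C}_{\mathit{fin}})$ is a set; (C3) $\hom(A,B)$ is finite for $A,B\in\mathrm{Ob}(\mathbb{C}_{\mathit{fin}})$; (C4) for every $F\in\mathrm{Ob}(\mathbb{C})$ there is $A\in\mathrm{Ob}(\mathbb{C}_{\mathit{fin}})$ with $A\to F$; (C5) for every $B\in\mathrm{Ob}(\mathbb{C}_{\mathit{fin}})$ the set $\{A\in\mathrm{Ob}(\mathbb{C}_{\mathit{fin}}):A\to B\}$ is finite. $F$ is universal for $\mathbb{A}$ if $A\to F$ for all $A\in\mathrm{Ob}(\mathbb{A})$. $F$ is locally finite for $\mathbb{A}$ if for all $A,B\in\mathrm{Ob}(\mathbb{A})$, $e\in\hom(A,F)$, $f\in\hom(B,F)$ there exist $D\in\mathrm{Ob}(\mathbb{A})$,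 $r\in\hom(D,F)$, $p\in\hom(A,D)$, $q\in\hom(B,D)$ with $r\cdot p=e$, $r\cdot q=f$, such that for every $H\in\mathrm{Ob}(\mathbb{C})$, $r'\in\hom(H,F)$, $p'\in\hom(A,H)$, $q'\in\hom(B,H)$ with $r'\cdot p'=e$, $r'\cdot q'=f$ there is $s\in\hom(D,H)$ with $r'\cdot s=r$, $s\cdot p=p'$, $s\cdot q=q'$. For $\chi:\hom(A,F)\to\{0,\dots,k-1\}$ and $w\in\hom(B,F)$, $\chi^{(w)}(f)=\chi(w\cdot f)$ for $f\in\hom(A,B)$; $\ker g=\{(x,y):g(x)=g(y)\}$. A coloring $\lambda:\hom(A,B)\to\{0,\dots,t-1\}$ is essential at $B$ if for every $k\ge2$ and every $\chi:\hom(A,F)\to\{0,\dots,k-1\}$ there is $w\in\hom(B,F)$ with $\ker\lambda\subseteq\ker\chi^{(w)}$. A coloring $\gamma:\hom(A,F)\to\{0,\dots,t-1\}$ is essential if for every $B\in\mathrm{Ob}(\mathbb{A})$ with $A\to B$ and every $w\in\hom(B,F)$ the coloring $\gamma^{(w)}$ is essential at $B$. *)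

theory Defs
  imports Main
begin

definition category ::
  "'o set \<Rightarrow> ('o \<Rightarrow> 'o \<Rightarrow> 'm set) \<Rightarrow> ('m \<Rightarrow> 'm \<Rightarrow> 'm) \<Rightarrow> ('o \<Rightarrow> 'm) \<Rightarrow> bool" where
  "category Ob hom cmp idm \<longleftrightarrow>
     (\<forall>a\<in>Ob. \<forall>b\<in>Ob. \<forall>c\<in>Ob. \<forall>f\<in>hom a b. \<forall>g\<in>hom b c. cmp g f \<in> hom a c) \<and>
     (\<forall>a\<in>Ob. \<forall>b\<in>Ob. \<forall>c\<in>Ob. \<forall>d\<in>Ob. \<forall>f\<in>hom a b. \<forall>g\<in>hom b c. \<forall>h\<in>hom c d.
         cmp h (cmp g f) = cmp (cmp h g) f) \<and>
     (\<forall>a\<in>Ob. idm a \<in> hom a a) \<and>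
     (\<forall>a\<in>Ob. \<forall>b\<in>Ob. \<forall>f\<in>hom a b. cmp (idm b) f = f \<and> cmp f (idm a) = f) \<and>
     (\<forall>a\<in>Ob. \<forall>b\<in>Ob. \<forall>a'\<in>Ob. \<forall>b'\<in>Ob. hom a b \<inter> hom a' b' \<noteq> {} \<longrightarrow> a = a' \<and> b = b')"

definition all_mono ::
  "'o set \<Rightarrow> ('o \<Rightarrow> 'o \<Rightarrow> 'm set) \<Rightarrow> ('m \<Rightarrow> 'm \<Rightarrow> 'm) \<Rightarrow> bool" where
  "all_mono Ob hom cmp \<longleftrightarrow>
     (\<forall>x\<in>Ob. \<forall>y\<in>Ob. \<forall>z\<in>Ob. \<forall>f\<in>hom y z. \<forall>g\<in>hom x y. \<forall>h\<in>hom x y.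
        cmp f g = cmp f h \<longrightarrow> g = h)"

text \<open>Conditions (C1)--(C5) for the full subcategory with object set Cfin.
  (C2) is automatic in HOL (Cfin is a set).\<close>
definition conditions_C ::
  "'o set \<Rightarrow> ('o \<Rightarrow> 'o \<Rightarrow> 'm set) \<Rightarrow> ('m \<Rightarrow> 'm \<Rightarrow> 'm) \<Rightarrow> 'o set \<Rightarrow> bool" where
  "conditions_C Ob hom cmp Cfin \<longleftrightarrow>
     all_mono Ob hom cmp \<and>
     (\<forall>a\<in>Cfin. \<forall>b\<in>Cfin. finite (hom a b)) \<and>
     (\<forall>F\<in>Ob. \<exists>a\<in>Cfin. hom a F \<noteq> {}) \<and>
     (\<forall>b\<in>Cfin. finite {a\<in>Cfin. hom a b \<noteq> {}})"

definition universal_for :: "('o \<Rightarrow> 'o \<Rightarrow> 'm set) \<Rightarrow> 'o set \<Rightarrow> 'o \<Rightarrow> bool" where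
  "universal_for hom AA F \<longleftrightarrow> (\<forall>a\<in>AA. hom a F \<noteq> {})"

definition locally_finite_for ::
  "'o set \<Rightarrow> ('o \<Rightarrow> 'o \<Rightarrow> 'm set) \<Rightarrow> ('m \<Rightarrow> 'm \<Rightarrow> 'm) \<Rightarrow> 'o set \<Rightarrow> 'o \<Rightarrow> bool" where
  "locally_finite_for Ob hom cmp AA F \<longleftrightarrow>
     (\<forall>a\<in>AA. \<forall>b\<in>AA. \<forall>e\<in>hom a F. \<forall>f\<in>hom b F.
        (\<exists>d\<in>AA. \<exists>r\<in>hom d F. \<exists>p\<in>hom a d. \<exists>q\<in>hom b d.
            cmp r p = e \<and> cmp r q = f \<and>
            (\<forall>h\<in>Ob. \<forall>r'\<in>hom h F. \<forall>p'\<in>hom a h. \<forall>q'\<in>hom b h.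
               cmp r' p' = e \<and> cmp r' q' = f \<longrightarrow>
               (\<exists>s\<in>hom d h. cmp r' s = r \<and> cmp s p = p' \<and> cmp s q = q'))))"

definition essential_at ::
  "('o \<Rightarrow> 'o \<Rightarrow> 'm set) \<Rightarrow> ('m \<Rightarrow> 'm \<Rightarrow> 'm) \<Rightarrow> 'o \<Rightarrow> 'o \<Rightarrow> 'o \<Rightarrow> ('m \<Rightarrow> nat) \<Rightarrow> bool" where
  "essential_at hom cmp F A B lam \<longleftrightarrow>
     (\<forall>k::nat. k \<ge> 2 \<longrightarrow> (\<forall>chi :: 'm \<Rightarrow> nat. chi ` hom A F \<subseteq> {..<k} \<longrightarrow>
        (\<exists>w\<in>hom B F. \<forall>f\<in>hom A B. \<forall>g\<in>hom A B.
            lam f = lam g \<longrightarrow> chi (cmp w f) = chi (cmp w g))))"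

definition essential ::
  "('o \<Rightarrow> 'o \<Rightarrow> 'm set) \<Rightarrow> ('m \<Rightarrow> 'm \<Rightarrow> 'm) \<Rightarrow> 'o set \<Rightarrow> 'o \<Rightarrow> 'o \<Rightarrow> ('m \<Rightarrow> nat) \<Rightarrow> bool" where
  "essential hom cmp AA F A gam \<longleftrightarrow>
     (\<forall>B\<in>AA. hom A B \<noteq> {} \<longrightarrow>
        (\<forall>w\<in>hom B F. essential_at hom cmp F A B (\<lambda>f. gam (cmp w f))))"

end

theory Submission
  imports Defs "HOL-Analysis.Analysis"
begin

lemma cat_comp:
  assumes "category Ob hom cmp idm" "a\<in>Ob" "b\<in>Ob" "c\<in>Ob" "f\<in>hom a b" "g\<in>hom b c"
  shows "cmp g f \<in> hom a c"
  using assms unfolding category_def by blast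

lemma cat_assoc:
  assumes "category Ob hom cmp idm" "a\<in>Ob" "b\<in>Ob" "c\<in>Ob" "d\<in>Ob"
    "f\<in>hom a b" "g\<in>hom b c" "h\<in>hom c d"
  shows "cmp h (cmp g f) = cmp (cmp h g) f"
  using assms unfolding category_def by blast

lemma cat_id:
  assumes "category Ob hom cmp idm" "a\<in>Ob"
  shows "idm a \<in> hom a a"
  using assms unfolding category_def by blast

lemma cat_idr:
  assumes "category Ob hom cmp idm" "a\<in>Ob" "b\<in>Ob" "f\<in>hom a b"
  shows "cmp f (idm a) = f"
  using assms unfolding category_def by blast

lemma ess_cong:
  assumes "\<forall>f\<in>hom A B. la f = lb f"
  shows "essential_at hom cmp F A B la = essential_at hom cmp F A B lb"
  using assms unfolding essential_at_def by (metis (no_types, lifting))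

lemma ess_comp:
  assumes cat: "category Ob hom cmp idm" and ob: "A\<in>Ob" "B\<in>Ob" "D\<in>Ob" "F\<in>Ob"
    and p: "p\<in>hom B D" and ess: "essential_at hom cmp F A D lam"
  shows "essential_at hom cmp F A B (\<lambda>f. lam (cmp p f))"
  unfolding essential_at_def
proof (intro allI impI)
  fix k :: nat and chi :: "'b \<Rightarrow> nat"
  assume "2 \<le> k" "chi ` hom A F \<subseteq> {..<k}"
  then obtain w where w: "w \<in> hom D F" and
    wk: "\<forall>f\<in>hom A D. \<forall>g\<in>hom A D. lam f = lam g \<longrightarrow> chi (cmp w f) = chi (cmp w g)"
    using ess unfolding essential_at_def by blast
  show "\<exists>w\<in>hom B F. \<forall>f\<in>hom A B. \<forall>g\<in>hom A B.
          lam (cmp p f) = lam (cmp p g) \<longrightarrow> chi (cmp w f) = chi (cmp w g)"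
  proof (intro bexI ballI impI)
    show "cmp w p \<in> hom B F" using cat_comp[OF cat ob(2,3,4) p w] .
    fix f g assume f: "f\<in>hom A B" and g: "g\<in>hom A B" and eq: "lam (cmp p f) = lam (cmp p g)"
    have pf: "cmp p f \<in> hom A D" using cat_comp[OF cat ob(1,2,3) f p] .
    have pg: "cmp p g \<in> hom A D" using cat_comp[OF cat ob(1,2,3) g p] .
    have "chi (cmp w (cmp p f)) = chi (cmp w (cmp p g))" using wk pf pg eq by blast
    then show "chi (cmp (cmp w p) f) = chi (cmp (cmp w p) g)"
      using cat_assoc[OF cat ob f p w] cat_assoc[OF cat ob g p w] by simp
  qed
qed

lemma amalg:
  assumes cat: "category Ob hom cmp idm" and sub: "AA \<subseteq> Ob" and FO: "F \<in> Ob"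
    and univ: "universal_for hom AA F"
    and lf: "locally_finite_for Ob hom cmp AA F" and A: "A \<in> AA"
    and fin: "finite P"
  shows "P \<subseteq> {(B,w). B\<in>AA \<and> hom A B \<noteq> {} \<and> w \<in> hom B F} \<Longrightarrow>
    \<exists>D\<in>AA. hom A D \<noteq> {} \<and> (\<exists>r\<in>hom D F. \<forall>(B,w)\<in>P. \<exists>p\<in>hom B D. cmp r p = w)"
  using fin
proof (induction P rule: finite_induct)
  case empty
  have "hom A A \<noteq> {}" using cat_id[OF cat] A sub by blast
  moreover have "hom A F \<noteq> {}" using univ A unfolding universal_for_def by blast
  ultimately show ?case using A by blast
next
  case (insert x P)
  obtain B w where x: "x = (B,w)" by (cases x)
  have B: "B\<in>AA" "hom A B \<noteq> {}" "w \<in> hom B F" using insert.prems x by auto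
  obtain D r where D: "D\<in>AA" "hom A D \<noteq> {}" "r\<in>hom D F"
    and Dp: "\<forall>(B,w)\<in>P. \<exists>p\<in>hom B D. cmp r p = w"
    using insert by blast
  obtain d r' p1 q where d: "d\<in>AA" "r'\<in>hom d F" "p1 \<in> hom D d" "q \<in> hom B d"
    "cmp r' p1 = r" "cmp r' q = w"
  proof -
    have "\<exists>d\<in>AA. \<exists>r'\<in>hom d F. \<exists>p\<in>hom D d. \<exists>q\<in>hom B d.
            cmp r' p = r \<and> cmp r' q = w \<and>
            (\<forall>h\<in>Ob. \<forall>r''\<in>hom h F. \<forall>p'\<in>hom D h. \<forall>q'\<in>hom B h.
               cmp r'' p' = r \<and> cmp r'' q' = w \<longrightarrow>
               (\<exists>s\<in>hom d h. cmp r'' s = r' \<and> cmp s p = p' \<and> cmp s q = q'))"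
      using lf D(1,3) B(1,3) unfolding locally_finite_for_def by (elim ballE) auto
    then show ?thesis using that by blast
  qed
  have "hom A d \<noteq> {}"
  proof -
    obtain f where "f \<in> hom A D" using D by blast
    then have "cmp p1 f \<in> hom A d" using cat_comp[OF cat _ _ _ _ d(3)] A D d sub by blast
    then show ?thesis by blast
  qed
  moreover have "\<forall>(B',w')\<in>insert x P. \<exists>p\<in>hom B' d. cmp r' p = w'"
  proof
    fix y assume "y \<in> insert x P"
    obtain B' w' where y: "y = (B',w')" by (cases y)
    show "case y of (B',w') \<Rightarrow> \<exists>p\<in>hom B' d. cmp r' p = w'"
    proof (cases "y = x")
      case True
      then show ?thesis using d x y by auto
    next
      case False
      then have "(B',w') \<in> P" using \<open>y \<in> insert x P\<close> y by auto
      then obtain p where p: "p \<in> hom B' D" "cmp r p = w'" using Dp by fastforce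
      have B'A: "B' \<in> AA" using insert.prems \<open>(B',w') \<in> P\<close> by auto
      have "cmp p1 p \<in> hom B' d" using cat_comp[OF cat _ _ _ p(1) d(3)] B'A D d sub by blast
      moreover have "cmp r' (cmp p1 p) = w'"
        using cat_assoc[OF cat _ _ _ _ p(1) d(3) d(2)] B'A D d sub FO p by auto
      ultimately show ?thesis using y by auto
    qed
  qed
  ultimately show ?case using d by blast
qed

theorem lemma3p5:
  fixes Ob :: "'o set" and hom :: "'o \<Rightarrow> 'o \<Rightarrow> 'm set"
    and cmp :: "'m \<Rightarrow> 'm \<Rightarrow> 'm" and idm :: "'o \<Rightarrow> 'm"
    and Cfin AA :: "'o set" and F A :: 'o and t :: nat
  assumes "category Ob hom cmp idm"
    and "Cfin \<subseteq> Ob"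
    and "conditions_C Ob hom cmp Cfin"
    and "AA \<subseteq> Cfin"
    and "F \<in> Ob"
    and "universal_for hom AA F"
    and "locally_finite_for Ob hom cmp AA F"
    and "A \<in> AA"
    and "t \<ge> 2"
    and "\<forall>B\<in>AA. hom A B \<noteq> {} \<longrightarrow>
           (\<exists>lam :: 'm \<Rightarrow> nat. lam ` hom A B \<subseteq> {..<t} \<and> essential_at hom cmp F A B lam)"
  shows "\<exists>gam :: 'm \<Rightarrow> nat. gam ` hom A F \<subseteq> {..<t} \<and> essential hom cmp AA F A gam"
proof -
  note cat = assms(1)
  have sub: "AA \<subseteq> Ob" using assms(2,4) by blast
  have FO: "F \<in> Ob" by fact
  have AO: "A \<in> Ob" using assms(8) sub by blast
  have mono: "all_mono Ob hom cmp" and finhom: "\<forall>a\<in>Cfin. \<forall>b\<in>Cfin. finite (hom a b)"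
    using assms(3) unfolding conditions_C_def by auto
  define I where "I = hom A F"
  define T where "T = product_topology (\<lambda>_. discrete_topology {..<t}) I"
  have topT: "topspace T = PiE I (\<lambda>_. {..<t})"
    unfolding T_def by simp
  define Pairs where "Pairs = {(B,w). B\<in>AA \<and> hom A B \<noteq> {} \<and> w \<in> hom B F}"
  define C where "C = (\<lambda>(B,w). {g \<in> topspace T. essential_at hom cmp F A B (\<lambda>f. g (cmp w f))})"
  define U where "U = insert (topspace T) (C ` Pairs)"
  have compT: "compact_space T"
    unfolding T_def by (simp add: compact_space_product_topology compact_space_discrete_topology)
  have closedC: "closedin T (C x)" if x: "x \<in> Pairs" for x
  proof -
    obtain B w where xe: "x = (B,w)" by (cases x)
    have B: "B\<in>AA" "hom A B \<noteq> {}" "w \<in> hom B F" using x xe Pairs_def by auto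
    have BO: "B \<in> Ob" using B sub by blast
    have finAB: "finite (hom A B)" using finhom assms(4,8) B by blast
    have Cx: "C x = {g \<in> topspace T. essential_at hom cmp F A B (\<lambda>f. g (cmp w f))}"
      using xe C_def by simp
    have "openin T (topspace T - C x)"
      unfolding T_def openin_product_topology_alt
    proof
      fix g assume g: "g \<in> topspace (product_topology (\<lambda>_. discrete_topology {..<t}) I) - C x"
      then have gT: "g \<in> PiE I (\<lambda>_. {..<t})" and gn: "\<not> essential_at hom cmp F A B (\<lambda>f. g (cmp w f))"
        using Cx topT T_def by auto
      define J where "J = (\<lambda>f. cmp w f) ` hom A B"
      have JI: "J \<subseteq> I" unfolding J_def I_def using cat_comp[OF cat AO BO FO _ B(3)] by blast
      define V where "V = (\<lambda>i. if i \<in> J then {g i} else {..<t})"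
      show "\<exists>V. finite {i \<in> I. V i \<noteq> topspace (discrete_topology {..<t})} \<and>
             (\<forall>i\<in>I. openin (discrete_topology {..<t}) (V i)) \<and> g \<in> Pi\<^sub>E I V \<and>
             Pi\<^sub>E I V \<subseteq> topspace (product_topology (\<lambda>_. discrete_topology {..<t}) I) - C x"
      proof (intro exI conjI)
        have "{i \<in> I. V i \<noteq> topspace (discrete_topology {..<t})} \<subseteq> J"
          unfolding V_def by auto
        moreover have "finite J" unfolding J_def using finAB by simp
        ultimately show "finite {i \<in> I. V i \<noteq> topspace (discrete_topology {..<t})}"
          using finite_subset by blast
        show "\<forall>i\<in>I. openin (discrete_topology {..<t}) (V i)"
          using gT unfolding V_def by (auto simp: PiE_iff)
        show "g \<in> Pi\<^sub>E I V" using gT unfolding V_def by (auto simp: PiE_iff)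
        show "Pi\<^sub>E I V \<subseteq> topspace (product_topology (\<lambda>_. discrete_topology {..<t}) I) - C x"
        proof
          fix h assume h: "h \<in> Pi\<^sub>E I V"
          have hT: "h \<in> PiE I (\<lambda>_. {..<t})"
            using h gT unfolding V_def by (auto simp: PiE_iff split: if_splits)
          have "\<forall>f\<in>hom A B. h (cmp w f) = g (cmp w f)"
          proof
            fix f assume f: "f \<in> hom A B"
            have "cmp w f \<in> J" "cmp w f \<in> I" using f JI unfolding J_def by auto
            then show "h (cmp w f) = g (cmp w f)" using h unfolding V_def by (auto simp: PiE_iff)
          qed
          then have "\<not> essential_at hom cmp F A B (\<lambda>f. h (cmp w f))"
            using gn ess_cong[where hom=hom and cmp=cmp and F=F and A=A and B=B and la="\<lambda>f. h (cmp w f)" and lb="\<lambda>f. g (cmp w f)"] by simp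
          then show "h \<in> topspace (product_topology (\<lambda>_. discrete_topology {..<t}) I) - C x"
            using hT Cx topT T_def by auto
        qed
      qed
    qed
    moreover have "C x \<subseteq> topspace T" using Cx by auto
    ultimately show ?thesis unfolding closedin_def by blast
  qed
  have closedU: "\<forall>X\<in>U. closedin T X" unfolding U_def using closedC by auto
  have fipU: "\<Inter>\<F> \<noteq> {}" if "finite \<F>" "\<F> \<subseteq> U" for \<F>
  proof -
    have "\<F> - {topspace T} \<subseteq> C ` Pairs" using that U_def by auto
    moreover have "finite (\<F> - {topspace T})" using that by simp
    ultimately obtain P where P: "P \<subseteq> Pairs" "finite P" "\<F> - {topspace T} = C ` P"
      by (meson finite_subset_image)
    obtain D r where D: "D\<in>AA" "hom A D \<noteq> {}" "r\<in>hom D F"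
      and Dp: "\<forall>(B,w)\<in>P. \<exists>p\<in>hom B D. cmp r p = w"
      using amalg[OF cat sub FO assms(6,7,8) P(2)] P(1) unfolding Pairs_def by blast
    have DO: "D \<in> Ob" using D sub by blast
    obtain lam where lam: "lam ` hom A D \<subseteq> {..<t}" "essential_at hom cmp F A D lam"
      using assms(10) D by blast
    define gam where "gam = restrict (\<lambda>h. if \<exists>f\<in>hom A D. h = cmp r f
        then lam (THE f. f\<in>hom A D \<and> h = cmp r f) else 0) I"
    have gval: "gam (cmp r f) = lam f" if f: "f \<in> hom A D" for f
    proof -
      have rf: "cmp r f \<in> I" unfolding I_def using cat_comp[OF cat AO DO FO f D(3)] .
      have uniq: "g = f" if "g \<in> hom A D" "cmp r f = cmp r g" for g
      proof -
        have "\<forall>f'\<in>hom A D. \<forall>g'\<in>hom A D. cmp r f' = cmp r g' \<longrightarrow> f' = g'"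
          using mono AO DO FO D(3) unfolding all_mono_def by blast
        then show ?thesis using that f by blast
      qed
      have th: "(THE g. g\<in>hom A D \<and> cmp r f = cmp r g) = f"
        using uniq f by (intro the_equality) blast+
      have ex: "\<exists>g\<in>hom A D. cmp r f = cmp r g" using f by blast
      show ?thesis unfolding gam_def using rf ex th by simp
    qed
    have gT: "gam \<in> topspace T"
    proof -
      have "gam h \<in> {..<t}" if h: "h \<in> I" for h
      proof (cases "\<exists>f\<in>hom A D. h = cmp r f")
        case True
        then obtain f where f: "f \<in> hom A D" "h = cmp r f" by blast
        then show ?thesis using gval lam(1) by auto
      next
        case False
        then show ?thesis unfolding gam_def using h assms(9) by simp
      qed
      moreover have "gam \<in> extensional I" unfolding gam_def by simp
      ultimately have "gam \<in> PiE I (\<lambda>_. {..<t})" by (simp add: PiE_iff)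
      then show ?thesis using topT by simp
    qed
    have gC: "gam \<in> C y" if y: "y \<in> P" for y
    proof -
      obtain B w where ye: "y = (B,w)" by (cases y)
      have B: "B\<in>AA" "hom A B \<noteq> {}" "w \<in> hom B F" using y ye P(1) Pairs_def by auto
      have BO: "B \<in> Ob" using B sub by blast
      obtain p where p: "p \<in> hom B D" "cmp r p = w" using Dp y ye by fastforce
      have "\<forall>f\<in>hom A B. gam (cmp w f) = lam (cmp p f)"
      proof
        fix f assume f: "f \<in> hom A B"
        have pf: "cmp p f \<in> hom A D" using cat_comp[OF cat AO BO DO f p(1)] .
        have "cmp w f = cmp r (cmp p f)"
          using cat_assoc[OF cat AO BO DO FO f p(1) D(3)] p(2) by simp
        then show "gam (cmp w f) = lam (cmp p f)" using gval pf by simp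
      qed
      then have "essential_at hom cmp F A B (\<lambda>f. gam (cmp w f))"
        using ess_comp[OF cat AO BO DO FO p(1) lam(2)]
          ess_cong[where hom=hom and cmp=cmp and F=F and A=A and B=B and la="\<lambda>f. gam (cmp w f)" and lb="\<lambda>f. lam (cmp p f)"] by simp
      then show ?thesis using gT ye C_def by simp
    qed
    have "gam \<in> \<Inter>\<F>"
    proof
      fix X assume "X \<in> \<F>"
      then have "X = topspace T \<or> X \<in> C ` P" using P(3) by blast
      then show "gam \<in> X" using gT gC by blast
    qed
    then show ?thesis by blast
  qed
  have fipU': "\<forall>\<F>. finite \<F> \<and> \<F> \<subseteq> U \<longrightarrow> \<Inter>\<F> \<noteq> {}"
    using fipU by blast
  have "\<Inter>U \<noteq> {}"
    using compT[unfolded compact_space_fip, THEN spec, of U] closedU fipU' by argo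
  then obtain gam where gam: "gam \<in> \<Inter>U" by blast
  have gT: "gam \<in> topspace T" using gam U_def by blast
  show ?thesis
  proof (intro exI conjI)
    show "gam ` hom A F \<subseteq> {..<t}" using gT topT I_def by (auto simp: PiE_iff)
    show "essential hom cmp AA F A gam"
      unfolding essential_def
    proof (intro ballI impI)
      fix B w assume B: "B \<in> AA" "hom A B \<noteq> {}" and w: "w \<in> hom B F"
      have "(B,w) \<in> Pairs" using B w Pairs_def by simp
      then have "gam \<in> C (B,w)" using gam U_def by blast
      then show "essential_at hom cmp F A B (\<lambda>f. gam (cmp w f))" using C_def by simp
    qed
  qed
qed

end
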